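(* Let $\rho$ be a density operator on a $d$-dimensional complex Hilbert space $\mathbb{H}$, and let $\{\ket{a_l}\}_{l=1}^d$ and $\{\ket{f_p}\}_{p=1}^d$ be two orthonormal bases of $\mathbb{H}$. Define the KD distribution $Q_{lp} = \langle f_p|a_l\rangle\langle a_l|\rho|f_p\rangle$ and the KD moments $q_n = \sum_{l,p} (Q_{lp})^n$ for positive integers $n$. Suppose the KD distribution is positive, i.e. $Q_{lp}$ is real and nonnegative for all $l,p$. Then for every positive integer $m$, the $(m+1)\times(m+1)$ Hankel matrix $H_m(\mathbf{q})$ with entries $[H_m(\mathbf{q})]_{ij} = q_{i+j+1}$ for $i,j\in\{0,1,\dots,m\}$ (built from $\mathbf{q} = (q_1,\dots,q_{2m+1})$) satisfies $\det[H_m(\mathbf{q})] \ge 0$.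
   Context: "Positive" means all entries of the KD distribution are real and nonnegative. *)

theory Defs
  imports Complex_Main "Jordan_Normal_Form.Matrix" "Jordan_Normal_Form.Determinant"
begin

definition braket :: "complex vec \<Rightarrow> complex vec \<Rightarrow> complex" where
  "braket u v = (\<Sum>i<dim_vec v. cnj (u $ i) * v $ i)"

definition density_operator :: "nat \<Rightarrow> complex mat \<Rightarrow> bool" where
  "density_operator d \<rho> \<longleftrightarrow>
     \<rho> \<in> carrier_mat d d \<and>
     (\<forall>i<d. \<forall>j<d. \<rho> $$ (j, i) = cnj (\<rho> $$ (i, j))) \<and>
     (\<forall>v\<in>carrier_vec d. Im (braket v (\<rho> *\<^sub>v v)) = 0 \<and> 0 \<le> Re (braket v (\<rho> *\<^sub>v v))) \<and>
     (\<Sum>i<d. \<rho> $$ (i, i)) = 1"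

definition orthonormal_basis :: "nat \<Rightarrow> (nat \<Rightarrow> complex vec) \<Rightarrow> bool" where
  "orthonormal_basis d b \<longleftrightarrow>
     (\<forall>l<d. b l \<in> carrier_vec d) \<and>
     (\<forall>l<d. \<forall>k<d. braket (b l) (b k) = (if l = k then 1 else 0))"

definition KD :: "complex mat \<Rightarrow> (nat \<Rightarrow> complex vec) \<Rightarrow> (nat \<Rightarrow> complex vec) \<Rightarrow> nat \<Rightarrow> nat \<Rightarrow> complex" where
  "KD \<rho> a f l p = braket (f p) (a l) * braket (a l) (\<rho> *\<^sub>v f p)"

definition KD_moment :: "nat \<Rightarrow> complex mat \<Rightarrow> (nat \<Rightarrow> complex vec) \<Rightarrow> (nat \<Rightarrow> complex vec) \<Rightarrow> nat \<Rightarrow> complex" where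
  "KD_moment d \<rho> a f n = (\<Sum>l<d. \<Sum>p<d. (KD \<rho> a f l p) ^ n)"

definition hankel :: "nat \<Rightarrow> (nat \<Rightarrow> 'a) \<Rightarrow> 'a mat" where
  "hankel m q = mat (m + 1) (m + 1) (\<lambda>(i, j). q (i + j + 1))"

end

theory Submission
  imports Defs "Jordan_Normal_Form.Char_Poly"
begin

lemma nonneg_prod_list: "\<forall>a\<in>set as. Im a = 0 \<and> 0 \<le> Re a \<Longrightarrow> Im (prod_list as) = 0 \<and> 0 \<le> Re (prod_list as)"
  by (induction as) auto

lemma det_nonneg_psd:
  fixes A :: "complex mat"
  assumes A: "A \<in> carrier_mat n n"
    and psd: "\<And>v. v \<in> carrier_vec n \<Longrightarrow> Im (conjugate v \<bullet> (A *\<^sub>v v)) = 0 \<and> 0 \<le> Re (conjugate v \<bullet> (A *\<^sub>v v))"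
  shows "Im (det A) = 0 \<and> 0 \<le> Re (det A)"
proof -
  obtain as where cp: "char_poly A = (\<Prod>a\<leftarrow>as. [:- a, 1:])" and len: "length as = n"
    using char_poly_factorized[OF A] by blast
  have ev: "Im a = 0 \<and> 0 \<le> Re a" if a: "a \<in> set as" for a
  proof -
    have "poly (char_poly A) a = 0" unfolding cp using a
      by (induction as) (auto simp: poly_prod_list)
    then have "eigenvalue A a" using eigenvalue_root_char_poly[OF A] by blast
    then obtain v where v: "v \<in> carrier_vec n" "v \<noteq> 0\<^sub>v n" "A *\<^sub>v v = a \<cdot>\<^sub>v v"
      unfolding eigenvalue_def eigenvector_def using A by auto
    have "conjugate v \<bullet> (A *\<^sub>v v) = a * (conjugate v \<bullet> v)"
      using v by (simp add: scalar_prod_smult_right)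
    also have "conjugate v \<bullet> v = v \<bullet>c v"
      using v by (simp add: comm_scalar_prod[of _ n])
    finally have eq: "conjugate v \<bullet> (A *\<^sub>v v) = a * (v \<bullet>c v)" .
    have pos: "v \<bullet>c v > 0" using conjugate_square_greater_0_vec[OF v(1)] v(2) by blast
    hence "Im (v \<bullet>c v) = 0" "Re (v \<bullet>c v) > 0" by (auto simp: less_complex_def)
    moreover note psd[OF v(1)]
    ultimately show ?thesis unfolding eq
      by (auto simp: zero_le_mult_iff)
  qed
  have z: "A + 0 \<cdot>\<^sub>m 1\<^sub>m n = A" using A by (intro eq_matI) auto
  have "det (- A) = poly (char_poly A) 0"
    using char_poly_matrix[OF A, of 0] A z by (simp add: char_matrix_def)
  also have "\<dots> = (\<Prod>a\<leftarrow>as. - a)" unfolding cp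
    by (induction as) (auto simp: poly_prod_list)
  also have "\<dots> = (-1)^n * prod_list as" using len
    by (induction as arbitrary: n) auto
  finally have "det (- A) = (-1)^n * prod_list as" .
  moreover have "det (- A) = (-1)^n * det A"
  proof -
    have "- A = (-1) \<cdot>\<^sub>m A" using A by auto
    then show ?thesis using det_smult[of "-1" A] A by simp
  qed
  ultimately have "det A = prod_list as" by (simp add: power_mult_distrib)
  then show ?thesis using nonneg_prod_list ev by auto
qed

lemma swap3: "(\<Sum>j\<in>J. \<Sum>l\<in>L. \<Sum>p\<in>P. F j l p) = (\<Sum>l\<in>L. \<Sum>p\<in>P. \<Sum>j\<in>J. F j l p)"
  by (rule trans[OF sum.swap], rule sum.cong[OF refl], rule sum.swap)

lemma quad_single:
  fixes x :: complex and v :: "complex vec"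
  assumes "Im x = 0" "0 \<le> Re x"
  shows "(\<Sum>i<N. cnj (v $ i) * (\<Sum>j<N. x ^ (i + j + 1) * v $ j))
         = complex_of_real (Re x * (cmod (\<Sum>j<N. x ^ j * v $ j))^2)"
proof -
  have cx: "cnj x = x" using assms by (simp add: complex_eq_iff)
  define w where "w = (\<Sum>j<N. x ^ j * v $ j)"
  have "(\<Sum>i<N. cnj (v $ i) * (\<Sum>j<N. x ^ (i + j + 1) * v $ j))
      = (\<Sum>i<N. x * (cnj (v $ i) * x ^ i) * w)"
    unfolding w_def sum_distrib_left
    by (intro sum.cong refl) (simp add: power_add mult_ac)
  also have "\<dots> = x * cnj w * w"
    unfolding w_def by (simp add: sum_distrib_left sum_distrib_right cx mult_ac)
  also have "\<dots> = complex_of_real (Re x * (cmod w)^2)"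
  proof -
    have "x = complex_of_real (Re x)" using assms by (simp add: complex_eq_iff)
    moreover have "cnj w * w = complex_of_real ((cmod w)^2)"
      by (metis complex_norm_square mult.commute of_real_power)
    ultimately show ?thesis by (metis mult.assoc of_real_mult)
  qed
  finally show ?thesis unfolding w_def .
qed

lemma hankel_psd:
  fixes x :: "nat \<Rightarrow> nat \<Rightarrow> complex" and v :: "complex vec"
  assumes x: "\<forall>l<d. \<forall>p<d. Im (x l p) = 0 \<and> 0 \<le> Re (x l p)"
    and v: "v \<in> carrier_vec (m+1)"
  defines "q \<equiv> (\<lambda>n. \<Sum>l<d. \<Sum>p<d. x l p ^ n)"
  shows "Im (conjugate v \<bullet> (hankel m q *\<^sub>v v)) = 0 \<and> 0 \<le> Re (conjugate v \<bullet> (hankel m q *\<^sub>v v))"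
proof -
  let ?N = "m+1"
  have "conjugate v \<bullet> (hankel m q *\<^sub>v v) = (\<Sum>i<?N. cnj (v $ i) * (\<Sum>j<?N. q (i + j + 1) * v $ j))"
  proof -
    have hv: "(hankel m q *\<^sub>v v) $ i = (\<Sum>j<?N. q (i + j + 1) * v $ j)" if "i < ?N" for i
    proof -
      have "(hankel m q *\<^sub>v v) $ i = (\<Sum>j\<in>{0..<?N}. q (i + j + 1) * v $ j)"
        using v that by (simp add: hankel_def scalar_prod_def row_def del: sum.op_ivl_Suc)
      then show ?thesis by (simp add: lessThan_atLeast0)
    qed
    have dims: "hankel m q \<in> carrier_mat ?N ?N" by (simp add: hankel_def)
    have "conjugate v \<bullet> (hankel m q *\<^sub>v v) = (\<Sum>i\<in>{0..<?N}. conjugate v $ i * (hankel m q *\<^sub>v v) $ i)"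
      using v dims by (simp add: scalar_prod_def del: sum.op_ivl_Suc)
    also have "\<dots> = (\<Sum>i\<in>{0..<?N}. cnj (v $ i) * (\<Sum>j<?N. q (i + j + 1) * v $ j))"
      using v by (intro sum.cong refl) (auto simp: hv)
    finally show ?thesis by (simp only: lessThan_atLeast0)
  qed
  also have "\<dots> = (\<Sum>l<d. \<Sum>p<d. \<Sum>i<?N. cnj (v $ i) * (\<Sum>j<?N. x l p ^ (i + j + 1) * v $ j))"
  proof -
    have "cnj (v $ i) * (\<Sum>j<?N. q (i + j + 1) * v $ j)
        = (\<Sum>l<d. \<Sum>p<d. cnj (v $ i) * (\<Sum>j<?N. x l p ^ (i + j + 1) * v $ j))" for i
    proof -
      have "(\<Sum>j<?N. q (i + j + 1) * v $ j) = (\<Sum>j<?N. \<Sum>l<d. \<Sum>p<d. x l p ^ (i + j + 1) * v $ j)"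
        unfolding q_def by (simp add: sum_distrib_right)
      also have "\<dots> = (\<Sum>l<d. \<Sum>p<d. \<Sum>j<?N. x l p ^ (i + j + 1) * v $ j)" by (rule swap3)
      finally show ?thesis by (simp add: sum_distrib_left)
    qed
    then have "(\<Sum>i<?N. cnj (v $ i) * (\<Sum>j<?N. q (i + j + 1) * v $ j))
       = (\<Sum>i<?N. \<Sum>l<d. \<Sum>p<d. cnj (v $ i) * (\<Sum>j<?N. x l p ^ (i + j + 1) * v $ j))" by simp
    also have "\<dots> = (\<Sum>l<d. \<Sum>p<d. \<Sum>i<?N. cnj (v $ i) * (\<Sum>j<?N. x l p ^ (i + j + 1) * v $ j))" by (rule swap3)
    finally show ?thesis .
  qed
  also have "\<dots> = (\<Sum>l<d. \<Sum>p<d. complex_of_real (Re (x l p) * (cmod (\<Sum>j<?N. x l p ^ j * v $ j))^2))"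
    using x by (intro sum.cong refl quad_single) auto
  also have "\<dots> = complex_of_real (\<Sum>l<d. \<Sum>p<d. Re (x l p) * (cmod (\<Sum>j<?N. x l p ^ j * v $ j))^2)"
    by simp
  finally have eq: "conjugate v \<bullet> (hankel m q *\<^sub>v v) = complex_of_real (\<Sum>l<d. \<Sum>p<d. Re (x l p) * (cmod (\<Sum>j<?N. x l p ^ j * v $ j))^2)" .
  have "0 \<le> (\<Sum>l<d. \<Sum>p<d. Re (x l p) * (cmod (\<Sum>j<?N. x l p ^ j * v $ j))^2)"
    using x by (intro sum_nonneg mult_nonneg_nonneg) auto
  then show ?thesis unfolding eq by simp
qed

theorem theorem2:
  fixes d :: nat and \<rho> :: "complex mat" and a f :: "nat \<Rightarrow> complex vec" and m :: nat
  assumes "density_operator d \<rho>"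
    and "orthonormal_basis d a"
    and "orthonormal_basis d f"
    and "\<forall>l<d. \<forall>p<d. Im (KD \<rho> a f l p) = 0 \<and> 0 \<le> Re (KD \<rho> a f l p)"
    and "0 < m"
  shows "Im (det (hankel m (KD_moment d \<rho> a f))) = 0 \<and> 0 \<le> Re (det (hankel m (KD_moment d \<rho> a f)))"
proof (rule det_nonneg_psd)
  show "hankel m (KD_moment d \<rho> a f) \<in> carrier_mat (m+1) (m+1)" by (simp add: hankel_def)
  fix v :: "complex vec" assume "v \<in> carrier_vec (m+1)"
  from hankel_psd[OF assms(4) this] show "Im (conjugate v \<bullet> (hankel m (KD_moment d \<rho> a f) *\<^sub>v v)) = 0 \<and>
          0 \<le> Re (conjugate v \<bullet> (hankel m (KD_moment d \<rho> a f) *\<^sub>v v))"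
    unfolding KD_moment_def[abs_def] by simp
qed

end
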